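(* Consider a unidirectional ring network of $M$ nodes (in the setting described in the context) under non-preemptive fixed-priority (FP) multiplexing, where each node $k$ offers a strict rate-latency service curve $\beta^k(t)=R^k(t-T^k)^+$ and each flow $i$ is leaky-bucket constrained with initial arrival curve $\sigma_i^0+\rho_i t$ at its source and arrival curve $\sigma_i^{k\ominus1}+\rho_i t$ at the input of each node $k$ on its path. Let $f$ be a flow and $n\in[1,h_f]$. Then the service curve offered to $f$ along $subpath_f(n)$ is the rate-latency curve $$\beta_f^{subpath_f(n)}(t)=R^{subpath_f(n)}\bigl(t-T^{subpath_f(n)}\bigr)^+,$$ where $$R^{subpath_f(n)}=\min_{k\in subpath_f(n)}\Bigl[R^k-\sum_{j\in hp_f^k}\rho_j\Bigr],$$ $$T^{subpath_f(n)}=\sum_{k\in subpath_f(n)}\Bigl(T^k+\frac{\max_{j\in lp_f^k}L_{max}(j)}{R^k}\Bigr)+\sum_{i\in\mathbb{K}_{\le f}(n)}\frac{\sigma_i^{f.first\ominus1}\,1_{\{i\ni f.first,\ i.first\neq f.first\}}}{R^{subpath_f(n)}}$$ $$\qquad+\sum_{i\in\mathbb{K}_{\le f}(n)}\frac{\sigma_i^0\,1_{\{f\ni i.first\}}+\rho_i\sum_{j\in subpath_f(n)\cap path_i}\Bigl(T^j+\frac{\max_{p\in lp_f^j}L_{max}(p)}{R^j}\Bigr)}{R^{subpath_f(n)}}.$$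
   Context: Network Calculus setting: flows are described by cumulative functions $F(t)$; $\alpha$ is an arrival curve if $F\le F\otimes\alpha$ with $(f\otimes g)(t)=\inf_{0\le s\le t}\{f(t-s)+g(s)\}$; $\beta$ is a service curve if output $F^*\ge F\otimes\beta$, strict if $F^*(t)-F^*(s)\ge\beta(t-s)$ on every backlogged period $(s,t)$. $[x]^+=\max(x,0)$. A service curve offered to $f$ along a subpath relates the input of $f$ at the first node of the subpath to its output at its last node. Ring model: nodes $1,\dots,M$ in a unidirectional ring, $l\oplus k=(l+k)\bmod M$, $l\ominus k=(l-k)\bmod M$. Each flow $i$ in a fixed finite set has path $path_i=(0,i.first,i.first\oplus1,\dots,i.first\oplus(h_i-1))$ with virtual source $0$, first hop $i.first$, $h_i\le M$ hops; $subpath_i(n)=(0,i.first,\dots,i.first\oplus(n-1))$. "$i\ni k$" means flow $i$ crosses node $k$. $\sigma_i^{k\ominus1}$ is the burst of flow $i$'s arrival curve at the input of node $k$; $\sigma_i^0$ its initial burst. The network is stable: $\sum_{i\ni k}\rho_i\le R^k$ for all $k$. FP notation: each flow $i$ has priority level $P(i)$ (0 is highest) and maximum packet length $L_{max}(i)$ (including protocol overhead); packets are transmitted non-preemptively, higher priority served first, flows within the same priority served in arbitrary order. $hp_f^k=\{i\neq f: i\ni k,\ P(i)\le P(f)\}$, $lp_f^k=\{i\ni k: P(i)>P(f)\}$ (the max over an empty set is taken as $0$), and $\mathbb{K}_{\le f}(n)=\{i\neq f:\exists k\in subpath_f(n),\ i\ni k,\ P(i)\le P(f)\}$. *)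

theory Defs
  imports "HOL-Analysis.Analysis"
begin

definition cumulative :: "(real \<Rightarrow> real) \<Rightarrow> bool" where
  "cumulative F \<longleftrightarrow> mono F \<and> (\<forall>t\<le>0. F t = 0)"

definition minplus_conv :: "(real \<Rightarrow> real) \<Rightarrow> (real \<Rightarrow> real) \<Rightarrow> real \<Rightarrow> real" where
  "minplus_conv f g t = (INF s\<in>{0..t}. f (t - s) + g s)"

definition arrival_curve :: "(real \<Rightarrow> real) \<Rightarrow> (real \<Rightarrow> real) \<Rightarrow> bool" where
  "arrival_curve F \<alpha> \<longleftrightarrow> (\<forall>t\<ge>0. F t \<le> minplus_conv F \<alpha> t)"

definition service_curve :: "(real \<Rightarrow> real) \<Rightarrow> (real \<Rightarrow> real) \<Rightarrow> (real \<Rightarrow> real) \<Rightarrow> bool" where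
  "service_curve F Fs \<beta> \<longleftrightarrow> (\<forall>t\<ge>0. minplus_conv F \<beta> t \<le> Fs t)"

definition rate_latency :: "real \<Rightarrow> real \<Rightarrow> real \<Rightarrow> real" where
  "rate_latency R T t = R * max 0 (t - T)"

definition strict_service :: "'f set \<Rightarrow> ('f \<Rightarrow> real \<Rightarrow> real) \<Rightarrow> ('f \<Rightarrow> real \<Rightarrow> real)
    \<Rightarrow> (real \<Rightarrow> real) \<Rightarrow> bool" where
  "strict_service C In Out \<beta> \<longleftrightarrow>
     (\<forall>s t. s < t \<longrightarrow> (\<forall>u\<in>{s<..<t}. (\<Sum>i\<in>C. In i u - Out i u) > 0) \<longrightarrow>
        (\<Sum>i\<in>C. Out i t - Out i s) \<ge> \<beta> (t - s))"

text \<open>Tx is the set of packet transmissions (j, a, b): a packet of flow j is transmitted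
  during (a, b); transmissions do not overlap; the output of a flow only grows during its own
  transmissions; a packet has length at most Lmax j; a packet of flow j can only start
  transmission at a time a at which no flow of strictly higher priority (smaller level) is
  backlogged.  Flows of the same priority are served in arbitrary order (no constraint).\<close>
definition np_fp_server :: "'f set \<Rightarrow> ('f \<Rightarrow> nat) \<Rightarrow> ('f \<Rightarrow> real) \<Rightarrow> ('f \<Rightarrow> real \<Rightarrow> real)
    \<Rightarrow> ('f \<Rightarrow> real \<Rightarrow> real) \<Rightarrow> ('f \<times> real \<times> real) set \<Rightarrow> bool" where
  "np_fp_server C P Lmax In Out Tx \<longleftrightarrow>
     (\<forall>i\<in>C. \<forall>t. Out i t \<le> In i t) \<and>
     (\<forall>(j, a, b)\<in>Tx. j \<in> C \<and> a < b \<and> Out j b - Out j a \<le> Lmax j \<and>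
                      (\<forall>i\<in>C. P i < P j \<longrightarrow> In i a \<le> Out i a)) \<and>
     (\<forall>x\<in>Tx. \<forall>y\<in>Tx. x \<noteq> y \<longrightarrow>
         snd (snd x) \<le> fst (snd y) \<or> snd (snd y) \<le> fst (snd x)) \<and>
     (\<forall>i\<in>C. \<forall>u v. u \<le> v \<longrightarrow> (\<forall>(j, a, b)\<in>Tx. j = i \<longrightarrow> b \<le> u \<or> v \<le> a) \<longrightarrow>
         Out i v = Out i u)"

text \<open>Nodes are 1..M; l (+) m on the ring and the predecessor l (-) 1.\<close>
definition ring_add :: "nat \<Rightarrow> nat \<Rightarrow> nat \<Rightarrow> nat" where
  "ring_add M l m = (l + m - 1) mod M + 1"

definition ring_prev :: "nat \<Rightarrow> nat \<Rightarrow> nat" where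
  "ring_prev M l = (l + M - 2) mod M + 1"

text \<open>Real (non-virtual) nodes of subpath_i(n) = (0, i.first, ..., i.first (+) (n-1)).\<close>
definition subpath_nodes :: "nat \<Rightarrow> ('f \<Rightarrow> nat) \<Rightarrow> 'f \<Rightarrow> nat \<Rightarrow> nat set" where
  "subpath_nodes M first i n = {ring_add M (first i) m | m. m < n}"

definition path_nodes :: "nat \<Rightarrow> ('f \<Rightarrow> nat) \<Rightarrow> ('f \<Rightarrow> nat) \<Rightarrow> 'f \<Rightarrow> nat set" where
  "path_nodes M first h i = subpath_nodes M first i (h i)"

definition crosses :: "nat \<Rightarrow> ('f \<Rightarrow> nat) \<Rightarrow> ('f \<Rightarrow> nat) \<Rightarrow> 'f \<Rightarrow> nat \<Rightarrow> bool" where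
  "crosses M first h i k \<longleftrightarrow> k \<in> path_nodes M first h i"

text \<open>Index of the node preceding k on path_i: 0 (virtual source) if k = i.first,
  otherwise k (-) 1.  The cumulative function of flow i with index m is its output at
  node m (m = 0: the arrival process at the source).\<close>
definition in_idx :: "nat \<Rightarrow> ('f \<Rightarrow> nat) \<Rightarrow> 'f \<Rightarrow> nat \<Rightarrow> nat" where
  "in_idx M first i k = (if k = first i then 0 else ring_prev M k)"

definition hp_set :: "'f set \<Rightarrow> nat \<Rightarrow> ('f \<Rightarrow> nat) \<Rightarrow> ('f \<Rightarrow> nat) \<Rightarrow> ('f \<Rightarrow> nat)
    \<Rightarrow> 'f \<Rightarrow> nat \<Rightarrow> 'f set" where
  "hp_set Fl M first h P f k = {i\<in>Fl. i \<noteq> f \<and> crosses M first h i k \<and> P i \<le> P f}"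

definition lp_set :: "'f set \<Rightarrow> nat \<Rightarrow> ('f \<Rightarrow> nat) \<Rightarrow> ('f \<Rightarrow> nat) \<Rightarrow> ('f \<Rightarrow> nat)
    \<Rightarrow> 'f \<Rightarrow> nat \<Rightarrow> 'f set" where
  "lp_set Fl M first h P f k = {i\<in>Fl. crosses M first h i k \<and> P i > P f}"

definition max_lp :: "'f set \<Rightarrow> nat \<Rightarrow> ('f \<Rightarrow> nat) \<Rightarrow> ('f \<Rightarrow> nat) \<Rightarrow> ('f \<Rightarrow> nat)
    \<Rightarrow> ('f \<Rightarrow> real) \<Rightarrow> 'f \<Rightarrow> nat \<Rightarrow> real" where
  "max_lp Fl M first h P Lmax f k =
     (if lp_set Fl M first h P f k = {} then 0 else Max (Lmax ` lp_set Fl M first h P f k))"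

definition K_le :: "'f set \<Rightarrow> nat \<Rightarrow> ('f \<Rightarrow> nat) \<Rightarrow> ('f \<Rightarrow> nat) \<Rightarrow> ('f \<Rightarrow> nat)
    \<Rightarrow> 'f \<Rightarrow> nat \<Rightarrow> 'f set" where
  "K_le Fl M first h P f n =
     {i\<in>Fl. i \<noteq> f \<and> (\<exists>k\<in>subpath_nodes M first f n. crosses M first h i k) \<and> P i \<le> P f}"

end

theory Submission
  imports Defs
begin



lemma lp_bound:
  fixes C G :: "'f set" and In Out :: "'f \<Rightarrow> real \<Rightarrow> real"
  assumes fp: "np_fp_server C P Lmax In Out Tx"
    and finC: "finite C" and GC: "G \<subseteq> C"
    and monoOut: "\<And>i. i \<in> C \<Longrightarrow> mono (Out i)"
    and prio: "\<And>i j. i \<in> G \<Longrightarrow> j \<in> C - G \<Longrightarrow> P i < P j"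
    and Lb: "\<And>j. j \<in> C - G \<Longrightarrow> Lmax j \<le> L" and L0: "0 \<le> L"
    and bklg: "\<And>u. s < u \<Longrightarrow> u < \<tau> \<Longrightarrow> \<exists>i\<in>G. Out i u < In i u"
  shows "(\<Sum>j\<in>C-G. Out j \<tau> - Out j s) \<le> L"
proof -
  have F2: "\<And>j a b. (j,a,b)\<in>Tx \<Longrightarrow> j\<in>C \<and> a<b \<and> Out j b - Out j a \<le> Lmax j \<and>
                      (\<forall>i\<in>C. P i < P j \<longrightarrow> In i a \<le> Out i a)"
    using fp unfolding np_fp_server_def by fast
  have F3: "\<And>x y. x\<in>Tx \<Longrightarrow> y\<in>Tx \<Longrightarrow> x \<noteq> y \<Longrightarrow>
         snd (snd x) \<le> fst (snd y) \<or> snd (snd y) \<le> fst (snd x)"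
    using fp unfolding np_fp_server_def by blast
  have F4: "\<And>i u v. i\<in>C \<Longrightarrow> u \<le> v \<Longrightarrow> (\<forall>(j, a, b)\<in>Tx. j = i \<longrightarrow> b \<le> u \<or> v \<le> a) \<Longrightarrow>
         Out i v = Out i u"
    using fp unfolding np_fp_server_def by blast
  have noA: False if h: "(j,a,b)\<in>Tx" "j \<in> C - G" "s < a" "a < \<tau>" for j a b
  proof -
    obtain i where i: "i\<in>G" "Out i a < In i a" using bklg h(3,4) by blast
    have "P i < P j" using prio i h by blast
    moreover have "i \<in> C" using GC i by blast
    ultimately have "In i a \<le> Out i a" using F2[OF h(1)] by blast
    thus False using i by linarith
  qed
  define J where "J = {j\<in>C-G. \<exists>a b. (j,a,b)\<in>Tx \<and> a \<le> s \<and> s < b}"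
  have each: "Out j \<tau> - Out j s \<le> (if j\<in>J then Lmax j else 0)" if j: "j\<in>C-G" for j
  proof (cases "j \<in> J")
    case False
    show ?thesis
    proof (cases "s \<le> \<tau>")
      case True
      have "\<forall>(j', a, b)\<in>Tx. j' = j \<longrightarrow> b \<le> s \<or> \<tau> \<le> a"
      proof (clarify)
        fix a b assume ab: "(j,a,b)\<in>Tx" and nb: "\<not> \<tau> \<le> a" 
        show "b \<le> s"
        proof (rule ccontr)
          assume "\<not> b \<le> s"
          show False
          proof (cases "a \<le> s")
            case True thus False using False ab j \<open>\<not> b \<le> s\<close> unfolding J_def by (force simp: not_le)
          next
            case False thus False using noA[OF ab j] nb by auto
          qed
        qed
      qed
      hence "Out j \<tau> = Out j s" using F4[of j s \<tau>] True j by blast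
      thus ?thesis using False by simp
    next
      case False
      have "Out j \<tau> \<le> Out j s" using monoOut[of j] j False by (auto simp: mono_def)
      thus ?thesis using \<open>j \<notin> J\<close> by simp
    qed
  next
    case True
    then obtain a b where ab: "(j,a,b)\<in>Tx" "a \<le> s" "s < b" unfolding J_def by blast
    have Lj: "Out j b - Out j a \<le> Lmax j" using F2[OF ab(1)] by blast
    have mj: "mono (Out j)" using monoOut j by blast
    have "Out j a \<le> Out j s" using mj ab by (auto simp: mono_def)
    moreover have "Out j \<tau> \<le> Out j b"
    proof (cases "\<tau> \<le> b")
      case True thus ?thesis using mj by (auto simp: mono_def)
    next
      case False
      have "\<forall>(j', a', b')\<in>Tx. j' = j \<longrightarrow> b' \<le> b \<or> \<tau> \<le> a'"
      proof (clarify)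
        fix a' b' assume ab': "(j,a',b')\<in>Tx" and nb: "\<not> \<tau> \<le> a'"
        show "b' \<le> b"
        proof (cases "(j,a',b') = (j,a,b)")
          case True thus ?thesis by simp
        next
          case False
          have "b \<le> a' \<or> b' \<le> a" using F3[OF ab(1) ab' False[symmetric]] by simp
          moreover have "a < b" using F2[OF ab(1)] by blast
          ultimately show ?thesis using noA[OF ab' j] nb ab by force
        qed
      qed
      hence "Out j \<tau> = Out j b" using F4[of j b \<tau>] False j by force
      thus ?thesis by simp
    qed
    ultimately show ?thesis using Lj True by simp
  qed
  have uniq: "j1 = j2" if hj: "j1\<in>J" "j2\<in>J" for j1 j2
  proof -
    obtain a1 b1 where 1: "(j1,a1,b1)\<in>Tx" "a1 \<le> s" "s < b1" using hj(1) unfolding J_def by blast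
    obtain a2 b2 where 2: "(j2,a2,b2)\<in>Tx" "a2 \<le> s" "s < b2" using hj(2) unfolding J_def by blast
    show ?thesis
    proof (rule ccontr)
      assume "j1 \<noteq> j2"
      hence "(j1,a1,b1) \<noteq> (j2,a2,b2)" by simp
      from F3[OF 1(1) 2(1) this] 1 2 show False by auto
    qed
  qed
  have "(\<Sum>j\<in>C-G. Out j \<tau> - Out j s) \<le> (\<Sum>j\<in>C-G. (if j\<in>J then Lmax j else 0))"
    by (rule sum_mono) (use each in auto)
  also have "\<dots> = (\<Sum>j\<in>J. Lmax j)"
    using finC by (simp add: sum.If_cases J_def Int_absorb1 Int_def)
  also have "\<dots> \<le> L"
  proof (cases "J = {}")
    case True thus ?thesis using L0 by simp
  next
    case False
    then obtain j0 where "j0 \<in> J" by blast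
    hence "J = {j0}" using uniq by blast
    thus ?thesis using Lb \<open>j0\<in>J\<close> unfolding J_def by (force simp: not_le)
  qed
  finally show ?thesis .
qed

lemma server_step:
  fixes C G :: "'f set" and In Out :: "'f \<Rightarrow> real \<Rightarrow> real"
  assumes fp: "np_fp_server C P Lmax In Out Tx"
    and strict: "strict_service C In Out (rate_latency R T)"
    and finC: "finite C" and GC: "G \<subseteq> C"
    and monoOut: "\<And>i. i \<in> C \<Longrightarrow> mono (Out i)"
    and z0: "\<And>i. i \<in> G \<Longrightarrow> In i 0 \<le> Out i 0"
    and prio: "\<And>i j. i \<in> G \<Longrightarrow> j \<in> C - G \<Longrightarrow> P i < P j"
    and Lb: "\<And>j. j \<in> C - G \<Longrightarrow> Lmax j \<le> L" and L0: "0 \<le> L"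
    and R: "R > 0" and T: "T \<ge> 0" and tau: "0 \<le> \<tau>" and eps: "\<epsilon> > 0"
  shows "\<exists>\<tau>'. 0 \<le> \<tau>' \<and> \<tau>' \<le> \<tau> \<and> (\<forall>i\<in>G. In i \<tau>' \<le> Out i \<tau>) \<and>
           R * (\<tau> - \<tau>' - \<epsilon> - (T + L / R)) \<le> (\<Sum>i\<in>G. Out i \<tau> - In i \<tau>')"
proof -
  have F1: "\<And>i t. i\<in>C \<Longrightarrow> Out i t \<le> In i t"
    using fp unfolding np_fp_server_def by blast
  define Z where "Z = {u. 0 \<le> u \<and> u \<le> \<tau> \<and> (\<forall>i\<in>G. In i u \<le> Out i u)}"
  have Z0: "0 \<in> Z" using tau z0 by (auto simp: Z_def)
  have bdd: "bdd_above Z" by (auto simp: Z_def bdd_above_def)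
  define s where "s = Sup Z"
  have s0: "0 \<le> s" using cSup_upper[OF Z0 bdd] by (simp add: s_def)
  have st: "s \<le> \<tau>" unfolding s_def by (rule cSup_least) (use Z0 in \<open>auto simp: Z_def\<close>)
  obtain t' where t': "t' \<in> Z" "s - \<epsilon> < t'"
    using less_cSupD[of Z "s - \<epsilon>"] Z0 eps unfolding s_def by auto
  have t's: "t' \<le> s" using cSup_upper[OF t'(1) bdd] by (simp add: s_def)
  have t'Z: "0 \<le> t'" "t' \<le> \<tau>" "\<forall>i\<in>G. In i t' \<le> Out i t'" using t'(1) by (auto simp: Z_def)
  have inS: "In i t' \<le> Out i s" if "i \<in> G" for i
    using t'Z(3) that monoOut[of i] GC t's by (force simp: mono_def)
  have bklg: "\<exists>i\<in>G. Out i u < In i u" if "s < u" "u < \<tau>" for u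
  proof (rule ccontr)
    assume "\<not> ?thesis"
    hence "u \<in> Z" using that s0 by (force simp: Z_def not_less)
    hence "u \<le> s" using cSup_upper[OF _ bdd] by (simp add: s_def)
    thus False using that by simp
  qed
  have main: "R * (\<tau> - t' - \<epsilon> - (T + L / R)) \<le> (\<Sum>i\<in>G. Out i \<tau> - In i t')"
  proof (cases "s < \<tau>")
    case False
    hence "s = \<tau>" using st by simp
    have "R * (\<tau> - t' - \<epsilon> - (T + L / R)) \<le> 0"
    proof -
      have "0 \<le> L / R" using R L0 by simp
      hence "\<tau> - t' - \<epsilon> - (T + L / R) \<le> 0" using T t'(2) \<open>s = \<tau>\<close> by linarith
      thus ?thesis using R by (simp add: mult_nonneg_nonpos)
    qed
    also have "0 \<le> (\<Sum>i\<in>G. Out i \<tau> - In i t')"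
      by (rule sum_nonneg) (use inS \<open>s = \<tau>\<close> in auto)
    finally show ?thesis .
  next
    case True
    have pos: "(\<Sum>i\<in>C. In i u - Out i u) > 0" if hu: "u \<in> {s<..<\<tau>}" for u
    proof -
      obtain i where i: "i\<in>G" "Out i u < In i u" using bklg hu by auto
      have "0 < In i u - Out i u" using i by simp
      also have "\<dots> \<le> (\<Sum>i\<in>C. In i u - Out i u)"
        by (rule member_le_sum) (use i GC F1 finC in auto)
      finally show ?thesis .
    qed
    have sc: "(\<Sum>i\<in>C. Out i \<tau> - Out i s) \<ge> rate_latency R T (\<tau> - s)"
      using strict True pos unfolding strict_service_def by blast
    have rl: "rate_latency R T (\<tau> - s) \<ge> R * (\<tau> - s - T)"
      unfolding rate_latency_def using R by (simp add: mult_left_mono)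
    have lp: "(\<Sum>j\<in>C-G. Out j \<tau> - Out j s) \<le> L"
      by (rule lp_bound[OF fp finC GC monoOut prio Lb L0 bklg]) auto
    have split: "(\<Sum>i\<in>C. Out i \<tau> - Out i s) = (\<Sum>i\<in>G. Out i \<tau> - Out i s) + (\<Sum>j\<in>C-G. Out j \<tau> - Out j s)"
      using finC GC by (metis sum.subset_diff add.commute)
    have G1: "(\<Sum>i\<in>G. Out i \<tau> - Out i s) \<le> (\<Sum>i\<in>G. Out i \<tau> - In i t')"
      by (rule sum_mono) (use inS in auto)
    have "R * (\<tau> - t' - \<epsilon> - (T + L / R)) = R * (\<tau> - t' - \<epsilon> - T) - L"
      using R by (simp add: field_simps)
    also have "\<dots> \<le> R * (\<tau> - s - T) - L"
      using R t'(2) by (intro diff_right_mono mult_left_mono) auto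
    finally show ?thesis using sc rl lp split G1 by linarith
  qed
  have "\<forall>i\<in>G. In i t' \<le> Out i \<tau>"
    using inS monoOut GC st by (force simp: mono_def)
  thus ?thesis using t'Z main by blast
qed




lemma ring_add_0: "1 \<le> l \<Longrightarrow> l \<le> M \<Longrightarrow> ring_add M l 0 = l"
  unfolding ring_add_def by simp

lemma ring_add_range: "1 \<le> M \<Longrightarrow> 1 \<le> ring_add M l m \<and> ring_add M l m \<le> M"
proof -
  assume "1 \<le> M"
  hence "(l+m-1) mod M < M" by simp
  thus ?thesis unfolding ring_add_def by linarith
qed

lemma ring_add_inj:
  assumes "1 \<le> l" "m1 < M" "m2 < M" "ring_add M l m1 = ring_add M l m2"
  shows "m1 = m2"
proof -
  have "(l - 1 + m1) mod M = (l - 1 + m2) mod M"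
    using assms(1,4) unfolding ring_add_def by (simp add: add.commute)
  hence "int ((l - 1 + m1) mod M) = int ((l - 1 + m2) mod M)" by simp
  hence "(int (l - 1) + int m1) mod int M = (int (l - 1) + int m2) mod int M"
    by (simp add: zmod_int)
  hence "(int (l - 1) + int m1 + (- int (l - 1))) mod int M = (int (l - 1) + int m2 + (- int (l - 1))) mod int M"
    by (rule mod_add_cong) simp
  hence "int m1 mod int M = int m2 mod int M" by simp
  thus ?thesis using assms(2,3) by simp
qed

lemma ring_prev_add:
  assumes "1 \<le> l" "1 \<le> M" "1 \<le> m"
  shows "ring_prev M (ring_add M l m) = ring_add M l (m - 1)"
proof -
  have "(l + m - 1) mod M + 1 + M - 2 = (l + m - 1) mod M + (M - 1)" using assms by simp
  hence "ring_prev M (ring_add M l m) = ((l + m - 1) mod M + (M - 1)) mod M + 1"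
    unfolding ring_prev_def ring_add_def by simp
  also have "((l + m - 1) mod M + (M - 1)) mod M = ((l + m - 1) + (M - 1)) mod M"
    by (simp add: mod_add_left_eq)
  also have "(l + m - 1) + (M - 1) = (l + (m - 1) - 1) + M" using assms by simp
  also have "((l + (m - 1) - 1) + M) mod M = (l + (m - 1) - 1) mod M" by simp
  finally show ?thesis unfolding ring_add_def by simp
qed

lemma cross_prev:
  assumes "crosses M first h i k" "k \<noteq> first i" "1 \<le> first i" "first i \<le> M" "1 \<le> M"
  shows "crosses M first h i (ring_prev M k)"
proof -
  obtain m where m: "m < h i" "k = ring_add M (first i) m"
    using assms(1) unfolding crosses_def path_nodes_def subpath_nodes_def by blast
  have "m \<noteq> 0"
  proof
    assume "m = 0"
    hence "k = first i" using m assms ring_add_0[of "first i" M] by simp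
    thus False using assms(2) by simp
  qed
  hence "ring_prev M k = ring_add M (first i) (m - 1)" using ring_prev_add assms m by simp
  moreover have "m - 1 < h i" using m by simp
  ultimately show ?thesis unfolding crosses_def path_nodes_def subpath_nodes_def by blast
qed

lemma crosses_first: "1 \<le> h i \<Longrightarrow> 1 \<le> first i \<Longrightarrow> first i \<le> M \<Longrightarrow> crosses M first h i (first i)"
  unfolding crosses_def path_nodes_def subpath_nodes_def
proof -
  assume "1 \<le> h i" "1 \<le> first i" "first i \<le> M"
  hence "first i = ring_add M (first i) 0 \<and> 0 < h i" using ring_add_0[of "first i" M] by simp
  thus "first i \<in> {ring_add M (first i) m |m. m < h i}" by blast
qed




lemma tele_D:
  "1 \<le> a \<Longrightarrow> a - 1 \<le> (k::nat) \<Longrightarrow> \<forall>m. a \<le> m \<and> m \<le> k \<longrightarrow> c m \<Longrightarrow>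
   (\<Sum>m=1..k. if c m then tt m - tt (m - 1) else (0::real)) =
         (\<Sum>m=1..a-1. if c m then tt m - tt (m - 1) else 0) + tt k - tt (a - 1)"
proof (induction k)
  case 0 thus ?case by simp
next
  case (Suc m')
  show ?case
  proof (cases "a - 1 = Suc m'")
    case True thus ?thesis by simp
  next
    case False
    hence "a - 1 \<le> m'" using Suc.prems by simp
    hence IH: "(\<Sum>m=1..m'. if c m then tt m - tt (m - 1) else (0::real)) =
         (\<Sum>m=1..a-1. if c m then tt m - tt (m - 1) else 0) + tt m' - tt (a - 1)"
      using Suc by simp
    have "c (Suc m')" using Suc.prems False by simp
    thus ?thesis using IH by (simp add: sum.cl_ivl_Suc)
  qed
qed

lemma hp_telescope:
  fixes Out In :: "nat \<Rightarrow> real \<Rightarrow> real" and tt sg :: "nat \<Rightarrow> real"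
  assumes OI': "\<And>m t. 1 \<le> m \<Longrightarrow> m \<le> n \<Longrightarrow> c m \<Longrightarrow> Out m t \<le> In m t"
    and ent_c: "\<And>m. ent m \<Longrightarrow> c m"
    and cont: "\<And>m. 1 \<le> m \<Longrightarrow> m \<le> n \<Longrightarrow> c m \<Longrightarrow> \<not> ent m \<Longrightarrow>
                  2 \<le> m \<and> c (m - 1) \<and> In m = Out (m - 1)"
    and arr: "\<And>m x y. 1 \<le> m \<Longrightarrow> m \<le> n \<Longrightarrow> ent m \<Longrightarrow> 0 \<le> x \<Longrightarrow> x \<le> y \<Longrightarrow>
                  In m y \<le> In m x + sg m + \<rho> * (y - x)"
    and ttm: "\<And>x y. x \<le> y \<Longrightarrow> y \<le> n \<Longrightarrow> tt x \<le> tt y"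
    and tt0: "0 \<le> tt 0"
  shows "(\<Sum>m=1..n. if c m then Out m (tt m) - In m (tt (m - 1)) else 0) \<le>
         (\<Sum>m=1..n. if ent m then sg m else 0) + \<rho> * (\<Sum>m=1..n. if c m then tt m - tt (m - 1) else 0)"
proof -
  define Yp where "Yp k = (\<Sum>m=1..k. if c m then Out m (tt m) - In m (tt (m - 1)) else 0)" for k
  define Sp where "Sp k = (\<Sum>m=1..k. if ent m then sg m else 0)" for k
  define Dp where "Dp k = (\<Sum>m=1..k. if c m then tt m - tt (m - 1) else 0)" for k
  have closed: "Yp k \<le> Sp k + \<rho> * Dp k"
    if k: "1 \<le> a" "a \<le> k" "k \<le> n" "ent a" "\<forall>m. a \<le> m \<and> m \<le> k \<longrightarrow> c m"
       "\<forall>t. Out k t \<le> In a t"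
       "Yp k \<le> Sp k - sg a + Out k (tt k) - In a (tt (a - 1)) + \<rho> * Dp (a - 1)" for a k
  proof -
    have "a - 1 \<le> n" using k by simp
    hence t1: "0 \<le> tt (a - 1)" using tt0 ttm[of 0 "a-1"] by simp
    have t2: "tt (a - 1) \<le> tt k" using ttm k by simp
    have "Out k (tt k) \<le> In a (tt k)" using k by blast
    also have "\<dots> \<le> In a (tt (a - 1)) + sg a + \<rho> * (tt k - tt (a - 1))"
      using arr[OF k(1) _ k(4) t1 t2] k by simp
    finally have "Yp k \<le> Sp k + \<rho> * (Dp (a - 1) + tt k - tt (a - 1))"
      using k(7) by (simp add: algebra_simps)
    moreover have "Dp k = Dp (a - 1) + tt k - tt (a - 1)"
      unfolding Dp_def by (rule tele_D) (use k in auto)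
    ultimately show ?thesis by simp
  qed
  have inv: "Yp k \<le> Sp k + \<rho> * Dp k \<and>
     (1 \<le> k \<and> c k \<longrightarrow> (\<exists>a. 1 \<le> a \<and> a \<le> k \<and> ent a \<and> (\<forall>m. a \<le> m \<and> m \<le> k \<longrightarrow> c m) \<and>
        (\<forall>t. Out k t \<le> In a t) \<and>
        Yp k \<le> Sp k - sg a + Out k (tt k) - In a (tt (a - 1)) + \<rho> * Dp (a - 1)))"
    if "k \<le> n" for k
    using that
  proof (induction k)
    case 0 thus ?case by (simp add: Yp_def Sp_def Dp_def)
  next
    case (Suc k)
    hence IH1: "Yp k \<le> Sp k + \<rho> * Dp k" by simp
    have IH2: "1 \<le> k \<Longrightarrow> c k \<Longrightarrow> (\<exists>a. 1 \<le> a \<and> a \<le> k \<and> ent a \<and> (\<forall>m. a \<le> m \<and> m \<le> k \<longrightarrow> c m) \<and>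
        (\<forall>t. Out k t \<le> In a t) \<and>
        Yp k \<le> Sp k - sg a + Out k (tt k) - In a (tt (a - 1)) + \<rho> * Dp (a - 1))"
      using Suc by simp
    have YS: "Yp (Suc k) = Yp k + (if c (Suc k) then Out (Suc k) (tt (Suc k)) - In (Suc k) (tt k) else 0)"
      unfolding Yp_def by (simp add: sum.cl_ivl_Suc)
    have SS: "Sp (Suc k) = Sp k + (if ent (Suc k) then sg (Suc k) else 0)"
      unfolding Sp_def by (simp add: sum.cl_ivl_Suc)
    have DS: "Dp (Suc k) = Dp k + (if c (Suc k) then tt (Suc k) - tt k else 0)"
      unfolding Dp_def by (simp add: sum.cl_ivl_Suc)
    show ?case
    proof (cases "c (Suc k)")
      case False
      hence "\<not> ent (Suc k)" using ent_c by blast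
      thus ?thesis using False IH1 YS SS DS by simp
    next
      case cS: True
      have openS: "\<exists>a. 1 \<le> a \<and> a \<le> Suc k \<and> ent a \<and> (\<forall>m. a \<le> m \<and> m \<le> Suc k \<longrightarrow> c m) \<and>
        (\<forall>t. Out (Suc k) t \<le> In a t) \<and>
        Yp (Suc k) \<le> Sp (Suc k) - sg a + Out (Suc k) (tt (Suc k)) - In a (tt (a - 1)) + \<rho> * Dp (a - 1)"
      proof (cases "ent (Suc k)")
        case True
        have "\<forall>t. Out (Suc k) t \<le> In (Suc k) t" using OI' cS Suc.prems by simp
        moreover have "Yp (Suc k) \<le> Sp (Suc k) - sg (Suc k) + Out (Suc k) (tt (Suc k)) - In (Suc k) (tt (Suc k - 1)) + \<rho> * Dp (Suc k - 1)"
          using IH1 YS SS True cS by simp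
        ultimately show ?thesis using True cS by (intro exI[of _ "Suc k"]) auto
      next
        case False
        have cc: "2 \<le> Suc k" "c k" "In (Suc k) = Out k" using cont[OF _ Suc.prems cS False] by auto
        then obtain a where a: "1 \<le> a" "a \<le> k" "ent a" "\<forall>m. a \<le> m \<and> m \<le> k \<longrightarrow> c m"
          "\<forall>t. Out k t \<le> In a t"
          "Yp k \<le> Sp k - sg a + Out k (tt k) - In a (tt (a - 1)) + \<rho> * Dp (a - 1)"
          using IH2 by auto
        have "\<forall>t. Out (Suc k) t \<le> In a t"
        proof
          fix t
          have "Out (Suc k) t \<le> In (Suc k) t" using OI' cS Suc.prems by simp
          thus "Out (Suc k) t \<le> In a t" using cc a(5) by (metis order_trans)
        qed
        moreover have "\<forall>m. a \<le> m \<and> m \<le> Suc k \<longrightarrow> c m" using a(4) cS le_Suc_eq by blast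
        moreover have "Yp (Suc k) \<le> Sp (Suc k) - sg a + Out (Suc k) (tt (Suc k)) - In a (tt (a - 1)) + \<rho> * Dp (a - 1)"
          using a(6) YS SS cS False cc by simp
        ultimately show ?thesis using a by (intro exI[of _ a]) auto
      qed
      then obtain a where a: "1 \<le> a \<and> a \<le> Suc k \<and> ent a \<and> (\<forall>m. a \<le> m \<and> m \<le> Suc k \<longrightarrow> c m) \<and>
        (\<forall>t. Out (Suc k) t \<le> In a t) \<and>
        Yp (Suc k) \<le> Sp (Suc k) - sg a + Out (Suc k) (tt (Suc k)) - In a (tt (a - 1)) + \<rho> * Dp (a - 1)"
        by blast
      have "Yp (Suc k) \<le> Sp (Suc k) + \<rho> * Dp (Suc k)"
        by (rule closed[of a]) (use a Suc.prems in auto)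
      thus ?thesis using openS by blast
    qed
  qed
  show ?thesis using inv[of n] unfolding Yp_def Sp_def Dp_def by simp
qed




lemma cum_nonneg: "cumulative F \<Longrightarrow> 0 \<le> F x"
  unfolding cumulative_def mono_def by (cases "x \<le> 0") (auto, metis linear)

lemma arr_extract:
  assumes "arrival_curve F (\<lambda>t. \<sigma> + \<rho> * t)" "cumulative F" "0 \<le> \<rho>" "0 \<le> x" "x \<le> y"
  shows "F y \<le> F x + \<sigma> + \<rho> * (y - x)"
proof -
  have "F y \<le> minplus_conv F (\<lambda>t. \<sigma> + \<rho> * t) y" using assms unfolding arrival_curve_def by auto
  also have "\<dots> \<le> F (y - (y - x)) + (\<sigma> + \<rho> * (y - x))"
    unfolding minplus_conv_def
  proof (rule cINF_lower)
    show "bdd_below ((\<lambda>s. F (y - s) + (\<sigma> + \<rho> * s)) ` {0..y})"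
      by (rule bdd_belowI[of _ \<sigma>]) (use assms cum_nonneg[OF assms(2)] in \<open>auto intro!: add_nonneg_nonneg\<close>)
    show "y - x \<in> {0..y}" using assms by auto
  qed
  finally show ?thesis by simp
qed

primrec bt :: "(nat \<Rightarrow> real \<Rightarrow> real \<Rightarrow> bool) \<Rightarrow> nat \<Rightarrow> real \<Rightarrow> nat \<Rightarrow> real" where
  "bt Q n t 0 = t"
| "bt Q n t (Suc j) = (SOME \<tau>'. Q (n - j) (bt Q n t j) \<tau>')"

lemma seq_exists:
  fixes Q :: "nat \<Rightarrow> real \<Rightarrow> real \<Rightarrow> bool" and t :: real and n :: nat
  assumes ex: "\<And>m \<tau>. 1 \<le> m \<Longrightarrow> m \<le> n \<Longrightarrow> 0 \<le> \<tau> \<Longrightarrow> \<exists>\<tau>'. 0 \<le> \<tau>' \<and> \<tau>' \<le> \<tau> \<and> Q m \<tau> \<tau>'"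
    and t: "0 \<le> t"
  shows "\<exists>tt. tt n = t \<and> (\<forall>m\<le>n. 0 \<le> tt m) \<and>
           (\<forall>m. 1 \<le> m \<longrightarrow> m \<le> n \<longrightarrow> tt (m - 1) \<le> tt m \<and> Q m (tt m) (tt (m - 1)))"
proof -
  define Q' where "Q' m \<tau> \<tau>' = (0 \<le> \<tau>' \<and> \<tau>' \<le> \<tau> \<and> Q m \<tau> \<tau>')" for m \<tau> \<tau>'
  define g where "g = bt Q' n t"
  have step: "0 \<le> g j \<and> (j < n \<longrightarrow> Q' (n - j) (g j) (g (Suc j)))" if "j \<le> n" for j
    using that
  proof (induction j)
    case 0
    have "Q' n t (g 1)" if "0 < n"
      unfolding g_def using someI_ex[OF ex[of n t, folded Q'_def]] that t by simp
    thus ?case using t by (simp add: g_def)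
  next
    case (Suc j)
    hence g0: "0 \<le> g j" and jn: "j < n" by auto
    have Qj: "Q' (n - j) (g j) (g (Suc j))"
      unfolding g_def using someI_ex[OF ex[of "n - j" "g j", folded Q'_def]] g0 jn by (simp add: g_def)
    hence g1: "0 \<le> g (Suc j)" unfolding Q'_def by simp
    have "Suc j < n \<Longrightarrow> Q' (n - Suc j) (g (Suc j)) (g (Suc (Suc j)))"
      unfolding g_def using someI_ex[OF ex[of "n - Suc j" "g (Suc j)", folded Q'_def]] g1 by (simp add: g_def)
    thus ?case using g1 by simp
  qed
  define tt where "tt m = g (n - m)" for m
  have "tt n = t" by (simp add: tt_def g_def)
  moreover have "\<forall>m\<le>n. 0 \<le> tt m" using step by (simp add: tt_def)
  moreover have "tt (m - 1) \<le> tt m \<and> Q m (tt m) (tt (m - 1))" if "1 \<le> m" "m \<le> n" for m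
  proof -
    have e1: "n - (m - 1) = Suc (n - m)" using that by simp
    have "Q' (n - (n - m)) (g (n - m)) (g (Suc (n - m)))" using step[of "n - m"] that by simp
    moreover have "n - (n - m) = m" using that by simp
    ultimately show ?thesis unfolding tt_def e1 Q'_def by simp
  qed
  ultimately show ?thesis by blast
qed

lemma node_ineq:
  fixes Rs R H lat S d e :: real
  assumes "0 \<le> Rs" "Rs \<le> R - H" "0 \<le> H" "0 \<le> lat" "0 \<le> S" "R * (d - e - lat) \<le> S" "0 \<le> e"
  shows "Rs * (d - e) - (Rs + H) * lat - H * e \<le> S - H * d"
proof (cases "d - e \<ge> lat")
  case True
  have "0 \<le> (R - H - Rs) * (d - e - lat)" using assms True by simp
  thus ?thesis using assms by (simp add: algebra_simps)
next
  case False
  have "0 \<le> (Rs + H) * (lat - (d - e))" using assms False by simp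
  thus ?thesis using assms by (simp add: algebra_simps)
qed

lemma max_lp_props:
  assumes "finite Fl" "\<And>i. i \<in> Fl \<Longrightarrow> Lmax i > 0"
  shows "0 \<le> max_lp Fl M first h P Lmax f k"
    and "\<And>j. j \<in> lp_set Fl M first h P f k \<Longrightarrow> Lmax j \<le> max_lp Fl M first h P Lmax f k"
proof -
  have fin: "finite (lp_set Fl M first h P f k)" using assms(1) unfolding lp_set_def by simp
  show "0 \<le> max_lp Fl M first h P Lmax f k"
  proof (cases "lp_set Fl M first h P f k = {}")
    case True thus ?thesis unfolding max_lp_def by simp
  next
    case False
    then obtain j where j: "j \<in> lp_set Fl M first h P f k" by blast
    hence "Lmax j \<le> Max (Lmax ` lp_set Fl M first h P f k)" using fin by simp
    moreover have "Lmax j > 0" using j assms(2) unfolding lp_set_def by simp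
    ultimately show ?thesis using False unfolding max_lp_def by simp
  qed
  show "\<And>j. j \<in> lp_set Fl M first h P f k \<Longrightarrow> Lmax j \<le> max_lp Fl M first h P Lmax f k"
    using fin unfolding max_lp_def by auto
qed




theorem corollary2:
  fixes M :: nat and Fl :: "'f set" and first h P :: "'f \<Rightarrow> nat"
    and Lmax \<rho> :: "'f \<Rightarrow> real" and \<sigma> :: "'f \<Rightarrow> nat \<Rightarrow> real"
    and R T :: "nat \<Rightarrow> real"
    and A :: "'f \<Rightarrow> nat \<Rightarrow> real \<Rightarrow> real"
    and Tx :: "nat \<Rightarrow> ('f \<times> real \<times> real) set"
    and f :: 'f and n :: nat
  assumes M: "M \<ge> 1"
    and finite_Fl: "finite Fl"
    and first: "\<And>i. i \<in> Fl \<Longrightarrow> 1 \<le> first i \<and> first i \<le> M"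
    and hops: "\<And>i. i \<in> Fl \<Longrightarrow> 1 \<le> h i \<and> h i \<le> M"
    and Lmax_pos: "\<And>i. i \<in> Fl \<Longrightarrow> Lmax i > 0"
    and rho_nonneg: "\<And>i. i \<in> Fl \<Longrightarrow> \<rho> i \<ge> 0"
    and sigma_nonneg: "\<And>i m. i \<in> Fl \<Longrightarrow> \<sigma> i m \<ge> 0"
    and R_pos: "\<And>k. 1 \<le> k \<Longrightarrow> k \<le> M \<Longrightarrow> R k > 0"
    and T_nonneg: "\<And>k. 1 \<le> k \<Longrightarrow> k \<le> M \<Longrightarrow> T k \<ge> 0"
    and stable: "\<And>k. 1 \<le> k \<Longrightarrow> k \<le> M \<Longrightarrow>
                   (\<Sum>i\<in>{i\<in>Fl. crosses M first h i k}. \<rho> i) \<le> R k"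
    and cumul_src: "\<And>i. i \<in> Fl \<Longrightarrow> cumulative (A i 0)"
    and cumul_out: "\<And>i k. i \<in> Fl \<Longrightarrow> crosses M first h i k \<Longrightarrow> cumulative (A i k)"
    and arrival: "\<And>i k. i \<in> Fl \<Longrightarrow> crosses M first h i k \<Longrightarrow>
                   arrival_curve (A i (in_idx M first i k))
                     (\<lambda>t. \<sigma> i (in_idx M first i k) + \<rho> i * t)"
    and strict: "\<And>k. 1 \<le> k \<Longrightarrow> k \<le> M \<Longrightarrow>
                   strict_service {i\<in>Fl. crosses M first h i k}
                     (\<lambda>i. A i (in_idx M first i k)) (\<lambda>i. A i k) (rate_latency (R k) (T k))"
    and fp: "\<And>k. 1 \<le> k \<Longrightarrow> k \<le> M \<Longrightarrow>
                   np_fp_server {i\<in>Fl. crosses M first h i k} P Lmax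
                     (\<lambda>i. A i (in_idx M first i k)) (\<lambda>i. A i k) (Tx k)"
    and f: "f \<in> Fl"
    and n: "1 \<le> n" "n \<le> h f"
  shows
    "let sub = subpath_nodes M first f n;
         Rsub = Min ((\<lambda>k. R k - (\<Sum>j\<in>hp_set Fl M first h P f k. \<rho> j)) ` sub);
         lat = (\<lambda>k. T k + max_lp Fl M first h P Lmax f k / R k);
         K = K_le Fl M first h P f n;
         Tsub = (\<Sum>k\<in>sub. lat k)
           + (\<Sum>i\<in>K. \<sigma> i (ring_prev M (first f))
                 * (if crosses M first h i (first f) \<and> first i \<noteq> first f then 1 else 0) / Rsub)
           + (\<Sum>i\<in>K. (\<sigma> i 0 * (if crosses M first h f (first i) then 1 else 0)
                 + \<rho> i * (\<Sum>j\<in>sub \<inter> path_nodes M first h i. lat j)) / Rsub)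
     in service_curve (A f 0) (A f (ring_add M (first f) (n - 1))) (rate_latency Rsub Tsub)"

proof -
  define kk where "kk m = ring_add M (first f) (m - 1)" for m
  define sub where "sub = subpath_nodes M first f n"
  define Hs where "Hs k = (\<Sum>j\<in>hp_set Fl M first h P f k. \<rho> j)" for k
  define Rsub where "Rsub = Min ((\<lambda>k. R k - (\<Sum>j\<in>hp_set Fl M first h P f k. \<rho> j)) ` sub)"
  define lat where "lat = (\<lambda>k. T k + max_lp Fl M first h P Lmax f k / R k)"
  define K where "K = K_le Fl M first h P f n"
  define Tsub where "Tsub = (\<Sum>k\<in>sub. lat k)
           + (\<Sum>i\<in>K. \<sigma> i (ring_prev M (first f))
                 * (if crosses M first h i (first f) \<and> first i \<noteq> first f then 1 else 0) / Rsub)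
           + (\<Sum>i\<in>K. (\<sigma> i 0 * (if crosses M first h f (first i) then 1 else 0)
                 + \<rho> i * (\<Sum>j\<in>sub \<inter> path_nodes M first h i. lat j)) / Rsub)"
  define SigF where "SigF i = \<sigma> i (ring_prev M (first f))
                 * (if crosses M first h i (first f) \<and> first i \<noteq> first f then 1 else 0)
                 + \<sigma> i 0 * (if crosses M first h f (first i) then 1 else 0)" for i
  have goal_eq: "?thesis = service_curve (A f 0) (A f (kk n)) (rate_latency Rsub Tsub)"
    unfolding Let_def Tsub_def Rsub_def lat_def K_def sub_def kk_def by simp
  have fM: "1 \<le> first f" "first f \<le> M" using first[OF f] by auto
  have hf: "h f \<le> M" using hops[OF f] by auto
  have nM: "n \<le> M" using n hf by simp
  have kk_range: "1 \<le> kk m \<and> kk m \<le> M" for m unfolding kk_def using ring_add_range M by blast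
  have kk1: "kk 1 = first f" unfolding kk_def using ring_add_0 fM by simp
  have kk_inj: "m1 = m2" if "1 \<le> m1" "m1 \<le> n" "1 \<le> m2" "m2 \<le> n" "kk m1 = kk m2" for m1 m2
  proof -
    have "m1 - 1 = m2 - 1"
      using ring_add_inj[of "first f" "m1 - 1" M "m2 - 1"] that fM nM unfolding kk_def by simp
    thus ?thesis using that by simp
  qed
  have kk_prev: "ring_prev M (kk m) = kk (m - 1)" if "2 \<le> m" for m
    unfolding kk_def using ring_prev_add[of "first f" M "m - 1"] fM M that by simp
  have kk_ne1: "kk m \<noteq> first f" if "2 \<le> m" "m \<le> n" for m
    using kk_inj[of m 1] that n kk1 by auto
  have sub_eq: "sub = kk ` {1..n}"
  proof
    show "sub \<subseteq> kk ` {1..n}"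
    proof
      fix x assume "x \<in> sub"
      then obtain m where m: "m < n" "x = ring_add M (first f) m"
        unfolding sub_def subpath_nodes_def by blast
      hence "x = kk (Suc m)" unfolding kk_def by simp
      moreover have "Suc m \<in> {1..n}" using m by simp
      ultimately show "x \<in> kk ` {1..n}" by (simp add: rev_image_eqI)
    qed
    show "kk ` {1..n} \<subseteq> sub"
    proof
      fix x assume "x \<in> kk ` {1..n}"
      then obtain m where m: "1 \<le> m" "m \<le> n" "x = kk m" by auto
      hence "x = ring_add M (first f) (m - 1) \<and> m - 1 < n" unfolding kk_def by simp
      thus "x \<in> sub" unfolding sub_def subpath_nodes_def by blast
    qed
  qed
  have inj: "inj_on kk {1..n}" using kk_inj by (auto simp: inj_on_def)
  have fin_sub: "finite sub" using sub_eq by simp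
  have sub_ne: "sub \<noteq> {}" using sub_eq n by auto
  have cr_f: "crosses M first h f (kk m)" if "1 \<le> m" "m \<le> n" for m
  proof -
    have "kk m = ring_add M (first f) (m - 1) \<and> m - 1 < h f" using that n unfolding kk_def by simp
    thus ?thesis unfolding crosses_def path_nodes_def subpath_nodes_def by blast
  qed
  have sub_path_f: "crosses M first h f k" if "k \<in> sub" for k
    using that cr_f sub_eq by auto
  have cumIn: "cumulative (A i (in_idx M first i k))" if "i \<in> Fl" "crosses M first h i k" for i k
  proof (cases "k = first i")
    case True thus ?thesis using cumul_src that by (simp add: in_idx_def)
  next
    case False
    have "crosses M first h i (ring_prev M k)"
      using cross_prev[OF that(2) False] first[OF that(1)] M by simp
    thus ?thesis using cumul_out that False by (simp add: in_idx_def)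
  qed
  have finK: "finite K" unfolding K_def K_le_def using finite_Fl by simp
  have fK: "f \<notin> K" unfolding K_def K_le_def by simp
  have KFl: "K \<subseteq> Fl" unfolding K_def K_le_def by auto
  have hp_eq: "hp_set Fl M first h P f (kk m) = {i\<in>K. crosses M first h i (kk m)}"
    if "1 \<le> m" "m \<le> n" for m
    unfolding hp_set_def K_def K_le_def sub_def[symmetric] sub_eq using that by auto
  have HsK: "Hs (kk m) = (\<Sum>i\<in>K. if crosses M first h i (kk m) then \<rho> i else 0)"
    if "1 \<le> m" "m \<le> n" for m
    unfolding Hs_def hp_eq[OF that] using finK by (simp add: sum.inter_filter)
  have Hs0: "0 \<le> Hs k" for k
    unfolding Hs_def hp_set_def by (rule sum_nonneg) (use rho_nonneg in auto)
  have Hs_le: "Hs k \<le> R k" if "1 \<le> k" "k \<le> M" for k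
  proof -
    have "Hs k \<le> (\<Sum>i\<in>{i\<in>Fl. crosses M first h i k}. \<rho> i)"
      unfolding Hs_def hp_set_def
      by (rule sum_mono2) (use finite_Fl rho_nonneg in auto)
    thus ?thesis using stable[OF that] by simp
  qed
  have Rsub_le: "Rsub \<le> R (kk m) - Hs (kk m)" if "1 \<le> m" "m \<le> n" for m
  proof -
    have "kk m \<in> sub" using sub_eq that by auto
    thus ?thesis unfolding Rsub_def Hs_def using fin_sub by (intro Min_le) auto
  qed
  have Rsub0: "0 \<le> Rsub"
  proof -
    have "\<forall>a\<in>(\<lambda>k. R k - (\<Sum>j\<in>hp_set Fl M first h P f k. \<rho> j)) ` sub. 0 \<le> a"
    proof
      fix a assume "a \<in> (\<lambda>k. R k - (\<Sum>j\<in>hp_set Fl M first h P f k. \<rho> j)) ` sub"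
      then obtain m where m: "1 \<le> m" "m \<le> n" "a = R (kk m) - Hs (kk m)"
        using sub_eq unfolding Hs_def by auto
      thus "0 \<le> a" using Hs_le[of "kk m"] kk_range by simp
    qed
    thus ?thesis unfolding Rsub_def using fin_sub sub_ne by (simp add: Min_ge_iff)
  qed
  have lat0: "0 \<le> lat k" if "1 \<le> k" "k \<le> M" for k
    unfolding lat_def using T_nonneg[OF that] R_pos[OF that] max_lp_props(1)[where Lmax=Lmax, OF finite_Fl Lmax_pos]
    by simp
  define Gm where "Gm m = {i\<in>Fl. crosses M first h i (kk m) \<and> P i \<le> P f}" for m
  define In where "In i m = A i (in_idx M first i (kk m))" for i m
  define Out where "Out i m = A i (kk m)" for i m
  have node: "\<exists>\<tau>'. 0 \<le> \<tau>' \<and> \<tau>' \<le> \<tau> \<and> (\<forall>i\<in>Gm m. In i m \<tau>' \<le> Out i m \<tau>) \<and>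
        R (kk m) * (\<tau> - \<tau>' - \<epsilon> - lat (kk m)) \<le> (\<Sum>i\<in>Gm m. Out i m \<tau> - In i m \<tau>')"
    if "1 \<le> m" "m \<le> n" "0 \<le> \<tau>" "0 < \<epsilon>" for m \<tau> \<epsilon>
  proof -
    define k where "k = kk m"
    have k: "1 \<le> k" "k \<le> M" using kk_range k_def by auto
    have monoO: "mono (A i k)" if "i \<in> {i\<in>Fl. crosses M first h i k}" for i
      using cumul_out that unfolding cumulative_def by auto
    have z0: "A i (in_idx M first i k) 0 \<le> A i k 0" if "i \<in> Gm m" for i
    proof -
      have "i \<in> Fl" "crosses M first h i k" using that unfolding Gm_def k_def by auto
      thus ?thesis using cumIn cumul_out unfolding cumulative_def by auto
    qed
    have GC: "Gm m \<subseteq> {i\<in>Fl. crosses M first h i k}" unfolding Gm_def k_def by auto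
    have prio: "P i < P j" if "i \<in> Gm m" "j \<in> {i\<in>Fl. crosses M first h i k} - Gm m" for i j
      using that unfolding Gm_def k_def by auto
    have Lb: "Lmax j \<le> max_lp Fl M first h P Lmax f k" if "j \<in> {i\<in>Fl. crosses M first h i k} - Gm m" for j
    proof -
      have "j \<in> lp_set Fl M first h P f k" using that unfolding Gm_def k_def lp_set_def by auto
      thus ?thesis using max_lp_props(2)[where Lmax=Lmax, OF finite_Fl Lmax_pos] by blast
    qed
    have "\<exists>\<tau>'. 0 \<le> \<tau>' \<and> \<tau>' \<le> \<tau> \<and> (\<forall>i\<in>Gm m. A i (in_idx M first i k) \<tau>' \<le> A i k \<tau>) \<and>
           R k * (\<tau> - \<tau>' - \<epsilon> - (T k + max_lp Fl M first h P Lmax f k / R k))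
             \<le> (\<Sum>i\<in>Gm m. A i k \<tau> - A i (in_idx M first i k) \<tau>')"
      by (rule server_step[where G="Gm m" and L="max_lp Fl M first h P Lmax f k",
            OF fp[OF k] strict[OF k] _ GC monoO z0 prio Lb max_lp_props(1)[where Lmax=Lmax, OF finite_Fl Lmax_pos]
               R_pos[OF k] T_nonneg[OF k] that(3,4)])
         (use finite_Fl in auto)
    thus ?thesis unfolding In_def Out_def lat_def k_def by simp
  qed
  define Cst where "Cst = real n * Rsub + (\<Sum>m=1..n. Hs (kk m))"
  have Cst0: "0 \<le> Cst" unfolding Cst_def using Rsub0 Hs0 by (simp add: sum_nonneg)
  have key: "minplus_conv (A f 0) (rate_latency Rsub Tsub) t \<le> A f (kk n) t + \<epsilon> * Cst"
    if t0: "0 \<le> t" and eps: "0 < \<epsilon>" for t \<epsilon>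
  proof -
    define Q where "Q m \<tau> \<tau>' = ((\<forall>i\<in>Gm m. In i m \<tau>' \<le> Out i m \<tau>) \<and>
        R (kk m) * (\<tau> - \<tau>' - \<epsilon> - lat (kk m)) \<le> (\<Sum>i\<in>Gm m. Out i m \<tau> - In i m \<tau>'))" for m \<tau> \<tau>'
    have "\<exists>tt. tt n = t \<and> (\<forall>m\<le>n. 0 \<le> tt m) \<and>
           (\<forall>m. 1 \<le> m \<longrightarrow> m \<le> n \<longrightarrow> tt (m - 1) \<le> tt m \<and> Q m (tt m) (tt (m - 1)))"
    proof (rule seq_exists)
      fix m :: nat and \<tau> :: real assume "1 \<le> m" "m \<le> n" "0 \<le> \<tau>"
      thus "\<exists>\<tau>'. 0 \<le> \<tau>' \<and> \<tau>' \<le> \<tau> \<and> Q m \<tau> \<tau>'" using node[of m \<tau> \<epsilon>] eps unfolding Q_def by simp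
    qed (rule t0)
    then obtain tt where tt: "tt n = t" "\<And>m. m \<le> n \<Longrightarrow> 0 \<le> tt m"
      "\<And>m. 1 \<le> m \<Longrightarrow> m \<le> n \<Longrightarrow> tt (m - 1) \<le> tt m"
      "\<And>m. 1 \<le> m \<Longrightarrow> m \<le> n \<Longrightarrow> Q m (tt m) (tt (m - 1))" by blast
    have ttm: "tt x \<le> tt y" if "x \<le> y" "y \<le> n" for x y
      using that
    proof (induction y)
      case 0 thus ?case by simp
    next
      case (Suc y)
      show ?case
      proof (cases "x = Suc y")
        case True thus ?thesis by simp
      next
        case False
        hence "tt x \<le> tt y" using Suc by simp
        also have "tt y \<le> tt (Suc y)" using tt(3)[of "Suc y"] Suc.prems by simp
        finally show ?thesis .
      qed
    qed
    define v where "v i m = Out i m (tt m) - In i m (tt (m - 1))" for i m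
    define d where "d m = tt m - tt (m - 1)" for m
    have nodeF: "(\<forall>i\<in>Gm m. 0 \<le> v i m) \<and> R (kk m) * (d m - \<epsilon> - lat (kk m)) \<le> (\<Sum>i\<in>Gm m. v i m)"
      if "1 \<le> m" "m \<le> n" for m
      using tt(4)[OF that] unfolding Q_def v_def d_def by simp
    have fGm: "f \<in> Gm m" if "1 \<le> m" "m \<le> n" for m
      unfolding Gm_def using f cr_f[OF that] by simp
    have fchain: "(\<Sum>m=1..k. v f m) = Out f k (tt k) - A f 0 (tt 0)" if "1 \<le> k" "k \<le> n" for k
      using that
    proof (induction k)
      case 0 thus ?case by simp
    next
      case (Suc k)
      show ?case
      proof (cases "k = 0")
        case True
        thus ?thesis unfolding v_def In_def using kk1 by (simp add: in_idx_def)
      next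
        case False
        hence IH: "(\<Sum>m=1..k. v f m) = Out f k (tt k) - A f 0 (tt 0)" using Suc by simp
        have "in_idx M first f (kk (Suc k)) = kk k"
          using kk_ne1[of "Suc k"] kk_prev[of "Suc k"] False Suc.prems by (simp add: in_idx_def)
        hence "In f (Suc k) = Out f k" unfolding In_def Out_def by simp
        thus ?thesis using IH unfolding v_def by (simp add: sum.cl_ivl_Suc)
      qed
    qed
    have Xf: "(\<Sum>m=1..n. v f m) = A f (kk n) t - A f 0 (tt 0)"
      using fchain[of n] n tt(1) unfolding Out_def by simp
    have Xf0: "0 \<le> (\<Sum>m=1..n. v f m)"
      by (rule sum_nonneg) (use nodeF fGm in auto)
    have HP: "(\<Sum>m=1..n. if crosses M first h i (kk m) then v i m else 0)
              \<le> SigF i + \<rho> i * (\<Sum>m=1..n. if crosses M first h i (kk m) then d m else 0)"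
      if iK: "i \<in> K" for i
    proof -
      have iFl: "i \<in> Fl" using iK KFl by auto
      define c where "c m = crosses M first h i (kk m)" for m
      define ent where "ent m = (c m \<and> (m = 1 \<or> kk m = first i))" for m
      define sg where "sg m = \<sigma> i (in_idx M first i (kk m))" for m
      have "(\<Sum>m=1..n. if c m then A i (kk m) (tt m) - A i (in_idx M first i (kk m)) (tt (m - 1)) else 0)
          \<le> (\<Sum>m=1..n. if ent m then sg m else 0) + \<rho> i * (\<Sum>m=1..n. if c m then tt m - tt (m - 1) else 0)"
      proof (rule hp_telescope[where Out="\<lambda>m. A i (kk m)" and In="\<lambda>m. A i (in_idx M first i (kk m))"
               and c=c and ent=ent and sg=sg and tt=tt and \<rho>="\<rho> i" and n=n])
        show "A i (kk m) t' \<le> A i (in_idx M first i (kk m)) t'" if "1 \<le> m" "m \<le> n" "c m" for m t'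
        proof -
          have "np_fp_server {i\<in>Fl. crosses M first h i (kk m)} P Lmax
                     (\<lambda>i. A i (in_idx M first i (kk m))) (\<lambda>i. A i (kk m)) (Tx (kk m))"
            using fp kk_range by blast
          thus ?thesis using iFl that unfolding np_fp_server_def c_def by auto
        qed
        show "ent m \<Longrightarrow> c m" for m unfolding ent_def by simp
        show "2 \<le> m \<and> c (m - 1) \<and> A i (in_idx M first i (kk m)) = A i (kk (m - 1))"
          if "1 \<le> m" "m \<le> n" "c m" "\<not> ent m" for m
        proof -
          have m2: "2 \<le> m" "kk m \<noteq> first i" using that unfolding ent_def by auto
          have "crosses M first h i (ring_prev M (kk m))"
            using cross_prev[of M first h i "kk m"] that(3) m2 first[OF iFl] M unfolding c_def by simp
          moreover have "in_idx M first i (kk m) = kk (m - 1)"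
            using m2 kk_prev by (simp add: in_idx_def)
          ultimately show ?thesis using m2 kk_prev unfolding c_def by simp
        qed
        show "A i (in_idx M first i (kk m)) y
              \<le> A i (in_idx M first i (kk m)) x + sg m + \<rho> i * (y - x)"
          if "1 \<le> m" "m \<le> n" "ent m" "0 \<le> x" "x \<le> y" for m x y
        proof -
          have cm: "crosses M first h i (kk m)" using that unfolding ent_def c_def by simp
          show ?thesis unfolding sg_def
            using arr_extract[OF arrival[OF iFl cm] cumIn[OF iFl cm] rho_nonneg[OF iFl] that(4,5)] by simp
        qed
        show "tt x \<le> tt y" if "x \<le> y" "y \<le> n" for x y using ttm that .
        show "0 \<le> tt 0" using tt(2) by simp
      qed
      hence T1: "(\<Sum>m=1..n. if crosses M first h i (kk m) then v i m else 0)
          \<le> (\<Sum>m=1..n. if ent m then sg m else 0) + \<rho> i * (\<Sum>m=1..n. if crosses M first h i (kk m) then d m else 0)"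
        unfolding v_def d_def In_def Out_def c_def by simp
      have pw: "(if ent m then sg m else 0) \<le> (if kk m = first i then \<sigma> i 0 else 0)
             + (if m = 1 \<and> crosses M first h i (first f) \<and> first i \<noteq> first f then \<sigma> i (ring_prev M (first f)) else 0)"
        if "m \<in> {1..n}" for m
        using sigma_nonneg[OF iFl] kk1 unfolding ent_def sg_def c_def by (auto simp: in_idx_def)
      have P1: "(\<Sum>m=1..n. if ent m then sg m else 0) \<le>
            (\<Sum>m=1..n. (if kk m = first i then \<sigma> i 0 else 0)
             + (if m = 1 \<and> crosses M first h i (first f) \<and> first i \<noteq> first f then \<sigma> i (ring_prev M (first f)) else 0))"
        by (rule sum_mono) (rule pw)
      have P2: "(\<Sum>m=1..n. (if kk m = first i then \<sigma> i 0 else 0)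
             + (if m = 1 \<and> crosses M first h i (first f) \<and> first i \<noteq> first f then \<sigma> i (ring_prev M (first f)) else 0))
           = (\<Sum>m=1..n. if kk m = first i then \<sigma> i 0 else 0)
             + (\<Sum>m=1..n. if m = 1 \<and> crosses M first h i (first f) \<and> first i \<noteq> first f then \<sigma> i (ring_prev M (first f)) else 0)"
        by (rule sum.distrib)
      have P3: "(\<Sum>m=1..n. if kk m = first i then \<sigma> i 0 else 0) = (\<Sum>k\<in>sub. if k = first i then \<sigma> i 0 else 0)"
        unfolding sub_eq sum.reindex[OF inj] by (simp add: o_def)
      have P4: "(\<Sum>k\<in>sub. if k = first i then \<sigma> i 0 else 0) = (if first i \<in> sub then \<sigma> i 0 else 0)"
        using fin_sub by (simp add: sum.delta sum.delta')
      have P5: "(\<Sum>m=1..n. if m = 1 \<and> crosses M first h i (first f) \<and> first i \<noteq> first f then \<sigma> i (ring_prev M (first f)) else 0)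
          = (if crosses M first h i (first f) \<and> first i \<noteq> first f then \<sigma> i (ring_prev M (first f)) else 0)"
        using n by (cases "crosses M first h i (first f) \<and> first i \<noteq> first f") (auto simp: sum.delta)
      have P6: "(if first i \<in> sub then \<sigma> i 0 else 0) + (if crosses M first h i (first f) \<and> first i \<noteq> first f then \<sigma> i (ring_prev M (first f)) else 0)
          \<le> SigF i"
        unfolding SigF_def using sub_path_f sigma_nonneg[OF iFl] by auto
      show ?thesis using T1 P1 P2 P3 P4 P5 P6 by linarith
    qed
    have decomp: "(\<Sum>m=1..n. \<Sum>i\<in>Gm m. v i m) = (\<Sum>m=1..n. v f m)
        + (\<Sum>i\<in>K. \<Sum>m=1..n. if crosses M first h i (kk m) then v i m else 0)"
    proof -
      define W where "W i = (\<Sum>m=1..n. if crosses M first h i (kk m) \<and> P i \<le> P f then v i m else 0)" for i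
      have "(\<Sum>m=1..n. \<Sum>i\<in>Gm m. v i m) = (\<Sum>m=1..n. \<Sum>i\<in>Fl. if crosses M first h i (kk m) \<and> P i \<le> P f then v i m else 0)"
        unfolding Gm_def using finite_Fl by (simp add: sum.inter_filter)
      also have "\<dots> = (\<Sum>i\<in>Fl. W i)" unfolding W_def by (rule sum.swap)
      also have "\<dots> = (\<Sum>i\<in>insert f K. W i)"
      proof (rule sum.mono_neutral_right)
        show "finite Fl" by (rule finite_Fl)
        show "insert f K \<subseteq> Fl" using f KFl by auto
        show "\<forall>i\<in>Fl - insert f K. W i = 0"
        proof
          fix i assume i: "i \<in> Fl - insert f K"
          have "\<not> (crosses M first h i (kk m) \<and> P i \<le> P f)" if "m \<in> {1..n}" for m
          proof
            assume a: "crosses M first h i (kk m) \<and> P i \<le> P f"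
            have "kk m \<in> sub" using sub_eq that by auto
            hence "i \<in> K" using a i unfolding K_def K_le_def sub_def by auto
            thus False using i by simp
          qed
          thus "W i = 0" unfolding W_def by (intro sum.neutral) auto
        qed
      qed
      also have "\<dots> = W f + (\<Sum>i\<in>K. W i)" using finK fK by simp
      finally have D1: "(\<Sum>m=1..n. \<Sum>i\<in>Gm m. v i m) = W f + (\<Sum>i\<in>K. W i)" .
      have D2: "W f = (\<Sum>m=1..n. v f m)" unfolding W_def using cr_f by (intro sum.cong) auto
      have D3: "(\<Sum>i\<in>K. W i) = (\<Sum>i\<in>K. \<Sum>m=1..n. if crosses M first h i (kk m) then v i m else 0)"
        unfolding W_def using KFl unfolding K_def K_le_def by (intro sum.cong) auto
      show ?thesis using D1 D2 D3 by simp
    qed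
    have Hswap: "(\<Sum>m=1..n. Hs (kk m) * x m) = (\<Sum>i\<in>K. \<rho> i * (\<Sum>m=1..n. if crosses M first h i (kk m) then x m else 0))"
      for x :: "nat \<Rightarrow> real"
    proof -
      have "(\<Sum>m=1..n. Hs (kk m) * x m) = (\<Sum>m=1..n. \<Sum>i\<in>K. (if crosses M first h i (kk m) then \<rho> i else 0) * x m)"
        by (intro sum.cong refl) (simp add: HsK sum_distrib_right)
      also have "\<dots> = (\<Sum>i\<in>K. \<Sum>m=1..n. (if crosses M first h i (kk m) then \<rho> i else 0) * x m)"
        by (rule sum.swap)
      also have "\<dots> = (\<Sum>i\<in>K. \<rho> i * (\<Sum>m=1..n. if crosses M first h i (kk m) then x m else 0))"
        unfolding sum_distrib_left by (intro sum.cong refl) simp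
      finally show ?thesis .
    qed
    have latsub: "(\<Sum>j\<in>sub \<inter> path_nodes M first h i. lat j) = (\<Sum>m=1..n. if crosses M first h i (kk m) then lat (kk m) else 0)" for i
    proof -
      have "(\<Sum>j\<in>sub \<inter> path_nodes M first h i. lat j) = (\<Sum>j\<in>sub. if j \<in> path_nodes M first h i then lat j else 0)"
        using fin_sub by (rule sum.inter_restrict)
      also have "\<dots> = (\<Sum>m=1..n. if crosses M first h i (kk m) then lat (kk m) else 0)"
        unfolding sub_eq sum.reindex[OF inj] crosses_def by (simp add: o_def)
      finally show ?thesis .
    qed
    have latS: "(\<Sum>k\<in>sub. lat k) = (\<Sum>m=1..n. lat (kk m))"
      unfolding sub_eq sum.reindex[OF inj] by (simp add: o_def)
    have Dsum: "(\<Sum>m=1..n. d m) = t - tt 0"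
      using tele_D[of 1 n "\<lambda>_. True" tt] n tt(1) unfolding d_def by simp
    have pernode: "Rsub * (d m - \<epsilon>) - (Rsub + Hs (kk m)) * lat (kk m) - Hs (kk m) * \<epsilon>
        \<le> (\<Sum>i\<in>Gm m. v i m) - Hs (kk m) * d m" if "m \<in> {1..n}" for m
    proof (rule node_ineq)
      show "0 \<le> Rsub" by (rule Rsub0)
      show "Rsub \<le> R (kk m) - Hs (kk m)" using Rsub_le that by simp
      show "0 \<le> Hs (kk m)" by (rule Hs0)
      show "0 \<le> lat (kk m)" using lat0 kk_range by simp
      show "0 \<le> (\<Sum>i\<in>Gm m. v i m)" using nodeF that by (simp add: sum_nonneg)
      show "R (kk m) * (d m - \<epsilon> - lat (kk m)) \<le> (\<Sum>i\<in>Gm m. v i m)" using nodeF that by simp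
      show "0 \<le> \<epsilon>" using eps by simp
    qed
    have S1: "(\<Sum>m=1..n. Rsub * (d m - \<epsilon>) - (Rsub + Hs (kk m)) * lat (kk m) - Hs (kk m) * \<epsilon>)
        \<le> (\<Sum>m=1..n. (\<Sum>i\<in>Gm m. v i m) - Hs (kk m) * d m)"
      by (rule sum_mono) (rule pernode)
    have S1L: "(\<Sum>m=1..n. Rsub * (d m - \<epsilon>) - (Rsub + Hs (kk m)) * lat (kk m) - Hs (kk m) * \<epsilon>)
       = Rsub * (t - tt 0) - \<epsilon> * Cst - Rsub * (\<Sum>m=1..n. lat (kk m)) - (\<Sum>m=1..n. Hs (kk m) * lat (kk m))"
    proof -
      have e1: "Rsub * (d m - \<epsilon>) - (Rsub + Hs (kk m)) * lat (kk m) - Hs (kk m) * \<epsilon>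
         = Rsub * d m - Rsub * \<epsilon> - Rsub * lat (kk m) - Hs (kk m) * lat (kk m) - \<epsilon> * Hs (kk m)" for m
        by (simp add: algebra_simps)
      have "(\<Sum>m=1..n. Rsub * (d m - \<epsilon>) - (Rsub + Hs (kk m)) * lat (kk m) - Hs (kk m) * \<epsilon>)
         = Rsub * (\<Sum>m=1..n. d m) - real n * (Rsub * \<epsilon>) - Rsub * (\<Sum>m=1..n. lat (kk m))
           - (\<Sum>m=1..n. Hs (kk m) * lat (kk m)) - \<epsilon> * (\<Sum>m=1..n. Hs (kk m))"
        by (simp only: e1 sum_subtractf sum_distrib_left[symmetric] sum_constant card_atLeastAtMost) simp
      thus ?thesis unfolding Cst_def Dsum by (simp add: algebra_simps)
    qed
    have S1R: "(\<Sum>m=1..n. (\<Sum>i\<in>Gm m. v i m) - Hs (kk m) * d m)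
        = (\<Sum>m=1..n. \<Sum>i\<in>Gm m. v i m) - (\<Sum>m=1..n. Hs (kk m) * d m)"
      by (simp add: sum_subtractf)
    have HPs: "(\<Sum>i\<in>K. \<Sum>m=1..n. if crosses M first h i (kk m) then v i m else 0)
        \<le> (\<Sum>i\<in>K. SigF i) + (\<Sum>m=1..n. Hs (kk m) * d m)"
    proof -
      have "(\<Sum>i\<in>K. \<Sum>m=1..n. if crosses M first h i (kk m) then v i m else 0)
        \<le> (\<Sum>i\<in>K. SigF i + \<rho> i * (\<Sum>m=1..n. if crosses M first h i (kk m) then d m else 0))"
        by (rule sum_mono) (rule HP)
      also have "\<dots> = (\<Sum>i\<in>K. SigF i) + (\<Sum>m=1..n. Hs (kk m) * d m)"
        by (simp only: sum.distrib Hswap[of d])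
      finally show ?thesis .
    qed
    have lowX: "Rsub * (t - tt 0) - \<epsilon> * Cst - Rsub * (\<Sum>m=1..n. lat (kk m))
        - (\<Sum>i\<in>K. \<rho> i * (\<Sum>j\<in>sub \<inter> path_nodes M first h i. lat j)) - (\<Sum>i\<in>K. SigF i)
        \<le> (\<Sum>m=1..n. v f m)"
    proof -
      have "(\<Sum>m=1..n. Hs (kk m) * lat (kk m)) = (\<Sum>i\<in>K. \<rho> i * (\<Sum>j\<in>sub \<inter> path_nodes M first h i. lat j))"
        unfolding Hswap[of "\<lambda>m. lat (kk m)"] latsub by simp
      thus ?thesis using S1 S1L S1R HPs decomp by linarith
    qed
    have conv_le: "minplus_conv (A f 0) (rate_latency Rsub Tsub) t
        \<le> A f 0 (t - (t - tt 0)) + rate_latency Rsub Tsub (t - tt 0)"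
      unfolding minplus_conv_def
    proof (rule cINF_lower)
      show "bdd_below ((\<lambda>s. A f 0 (t - s) + rate_latency Rsub Tsub s) ` {0..t})"
        by (rule bdd_belowI[of _ 0])
           (use cum_nonneg[OF cumul_src[OF f]] Rsub0 in \<open>auto simp: rate_latency_def intro!: add_nonneg_nonneg mult_nonneg_nonneg\<close>)
      show "t - tt 0 \<in> {0..t}" using tt(2)[of 0] ttm[of 0 n] tt(1) by simp
    qed
    have c2: "minplus_conv (A f 0) (rate_latency Rsub Tsub) t
        \<le> A f 0 (tt 0) + rate_latency Rsub Tsub (t - tt 0)" using conv_le by simp
    have eC: "0 \<le> \<epsilon> * Cst" using eps Cst0 by simp
    show ?thesis
    proof (cases "Rsub = 0")
      case True
      hence "rate_latency Rsub Tsub (t - tt 0) = 0" by (simp add: rate_latency_def)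
      thus ?thesis using c2 Xf Xf0 eC by linarith
    next
      case False
      hence Rp: "0 < Rsub" using Rsub0 by simp
      define a where "a i = \<sigma> i (ring_prev M (first f))
                 * (if crosses M first h i (first f) \<and> first i \<noteq> first f then 1 else 0)" for i
      define b0 where "b0 i = \<sigma> i 0 * (if crosses M first h f (first i) then 1 else 0)" for i
      define b1 where "b1 i = \<rho> i * (\<Sum>j\<in>sub \<inter> path_nodes M first h i. lat j)" for i
      have A1: "Tsub = (\<Sum>k\<in>sub. lat k) + (\<Sum>i\<in>K. a i) / Rsub + (\<Sum>i\<in>K. b0 i + b1 i) / Rsub"
        unfolding Tsub_def a_def b0_def b1_def by (simp add: sum_divide_distrib)
      have A2: "Rsub * Tsub = Rsub * (\<Sum>k\<in>sub. lat k) + (\<Sum>i\<in>K. a i) + (\<Sum>i\<in>K. b0 i + b1 i)"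
        unfolding A1 using Rp by (simp add: field_simps)
      have A3: "(\<Sum>i\<in>K. b0 i + b1 i) = (\<Sum>i\<in>K. b0 i) + (\<Sum>i\<in>K. b1 i)" by (rule sum.distrib)
      have A4: "(\<Sum>i\<in>K. SigF i) = (\<Sum>i\<in>K. a i) + (\<Sum>i\<in>K. b0 i)"
        unfolding SigF_def a_def b0_def by (rule sum.distrib)
      have RT: "Rsub * Tsub = Rsub * (\<Sum>m=1..n. lat (kk m))
          + (\<Sum>i\<in>K. \<rho> i * (\<Sum>j\<in>sub \<inter> path_nodes M first h i. lat j)) + (\<Sum>i\<in>K. SigF i)"
        using A2 A3 A4 unfolding b1_def latS by linarith
      have "rate_latency Rsub Tsub (t - tt 0) \<le> (\<Sum>m=1..n. v f m) + \<epsilon> * Cst"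
      proof (cases "t - tt 0 - Tsub \<ge> 0")
        case True
        hence "rate_latency Rsub Tsub (t - tt 0) = Rsub * (t - tt 0) - Rsub * Tsub"
          unfolding rate_latency_def by (simp add: algebra_simps)
        thus ?thesis using lowX RT by linarith
      next
        case False
        thus ?thesis using Xf0 eC unfolding rate_latency_def by simp
      qed
      thus ?thesis using c2 Xf by linarith
    qed
  qed
  have "service_curve (A f 0) (A f (kk n)) (rate_latency Rsub Tsub)"
    unfolding service_curve_def
  proof (intro allI impI)
    fix t :: real assume t0: "0 \<le> t"
    show "minplus_conv (A f 0) (rate_latency Rsub Tsub) t \<le> A f (kk n) t"
    proof (rule field_le_epsilon)
      fix e :: real assume e: "0 < e"
      define \<epsilon> where "\<epsilon> = e / (Cst + 1)"
      have eps: "0 < \<epsilon>" unfolding \<epsilon>_def using e Cst0 by simp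
      have "\<epsilon> * Cst \<le> e"
      proof -
        have "\<epsilon> * Cst \<le> \<epsilon> * (Cst + 1)" using eps by simp
        also have "\<dots> = e" unfolding \<epsilon>_def using Cst0 by simp
        finally show ?thesis .
      qed
      thus "minplus_conv (A f 0) (rate_latency Rsub Tsub) t \<le> A f (kk n) t + e"
        using key[OF t0 eps] by simp
    qed
  qed
  thus ?thesis using goal_eq by simp
qed


end
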